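(* Let $M$ and $M'$ be matroids on the same finite ground set $S$, both of rank $r$, such that the circuits of $M$ of cardinality at most $r$ are exactly the circuits of $M'$ of cardinality at most $r$. Then $M=M'$. *)

theory Defs
  imports Main
begin

definition matroid :: "'a set \<Rightarrow> ('a set \<Rightarrow> bool) \<Rightarrow> bool" where
  "matroid S indep \<longleftrightarrow>
     finite S \<and>
     (\<forall>X. indep X \<longrightarrow> X \<subseteq> S) \<and>
     indep {} \<and>
     (\<forall>X Y. indep X \<and> Y \<subseteq> X \<longrightarrow> indep Y) \<and>
     (\<forall>X Y. indep X \<and> indep Y \<and> card X < card Y \<longrightarrow>
        (\<exists>e \<in> Y - X. indep (insert e X)))"

definition circuit :: "'a set \<Rightarrow> ('a set \<Rightarrow> bool) \<Rightarrow> 'a set \<Rightarrow> bool" where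
  "circuit S indep C \<longleftrightarrow> C \<subseteq> S \<and> \<not> indep C \<and> (\<forall>D. D \<subset> C \<longrightarrow> indep D)"

definition matroid_rank :: "'a set \<Rightarrow> ('a set \<Rightarrow> bool) \<Rightarrow> nat" where
  "matroid_rank S indep = Max {card X | X. X \<subseteq> S \<and> indep X}"

end

theory Submission
  imports Defs
begin

lemma mfin: "matroid S I \<Longrightarrow> finite S" unfolding matroid_def by (elim conjE)
lemma msub: "matroid S I \<Longrightarrow> I X \<Longrightarrow> X \<subseteq> S"
proof -
  assume m: "matroid S I" and x: "I X"
  from m have "\<forall>X. I X \<longrightarrow> X \<subseteq> S" unfolding matroid_def by (elim conjE)
  with x show ?thesis by blast
qed
lemma mdown: "matroid S I \<Longrightarrow> I X \<Longrightarrow> Y \<subseteq> X \<Longrightarrow> I Y"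
proof -
  assume m: "matroid S I" and x: "I X" "Y \<subseteq> X"
  from m have "\<forall>X Y. I X \<and> Y \<subseteq> X \<longrightarrow> I Y" unfolding matroid_def by (elim conjE)
  with x show ?thesis by blast
qed

lemma min_dep:
  assumes "finite X" "\<not> P X"
  shows "\<exists>C\<subseteq>X. \<not> P C \<and> (\<forall>D. D \<subset> C \<longrightarrow> P D)"
  using assms
proof (induction X rule: finite_psubset_induct)
  case (psubset A)
  show ?case
  proof (cases "\<forall>D. D \<subset> A \<longrightarrow> P D")
    case True then show ?thesis using psubset.prems by blast
  next
    case False
    then obtain D where D: "D \<subset> A" "\<not> P D" by blast
    from psubset.IH[OF D(1) D(2)] obtain C where
      C: "C \<subseteq> D" "\<not> P C" "\<forall>E. E \<subset> C \<longrightarrow> P E" by blast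
    have "C \<subseteq> A" using C(1) D(1) by (meson order.trans psubset_imp_subset)
    with C(2,3) show ?thesis by blast
  qed
qed

lemma card_le_rank:
  assumes "matroid S I" "I X"
  shows "card X \<le> matroid_rank S I"
proof -
  have fin: "finite S" using assms(1) by (rule mfin)
  have sub: "X \<subseteq> S" using assms by (rule msub)
  have "finite {card X | X. X \<subseteq> S \<and> I X}"
  proof -
    have "{card X | X. X \<subseteq> S \<and> I X} = card ` {X. X \<subseteq> S \<and> I X}" by blast
    moreover have "finite {X. X \<subseteq> S \<and> I X}"
      by (rule finite_subset[of _ "Pow S"]) (use fin in auto)
    ultimately show ?thesis by simp
  qed
  moreover have "card X \<in> {card X | X. X \<subseteq> S \<and> I X}" using sub assms(2) by blast
  ultimately show ?thesis unfolding matroid_rank_def by (rule Max_ge)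
qed

lemma one_dir:
  assumes "matroid S I" "matroid S J" "matroid_rank S I = r"
    and "\<And>C. card C \<le> r \<Longrightarrow> (circuit S I C \<longleftrightarrow> circuit S J C)"
    and "I X"
  shows "J X"
proof (rule ccontr)
  assume nj: "\<not> J X"
  have sub: "X \<subseteq> S" using assms(1,5) by (rule msub)
  have fin: "finite S" using assms(1) by (rule mfin)
  have "finite X" using fin sub by (rule finite_subset[rotated])
  then obtain C where C: "C \<subseteq> X" "\<not> J C" "\<forall>D. D \<subset> C \<longrightarrow> J D"
    using min_dep[of X J, OF \<open>finite X\<close> nj] by blast
  have "C \<subseteq> S" using C(1) sub by (rule subset_trans)
  hence circ: "circuit S J C" unfolding circuit_def using C(2,3) by blast
  have "card C \<le> card X" using \<open>finite X\<close> C(1) by (rule card_mono)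
  also have "\<dots> \<le> r" using card_le_rank[OF assms(1,5)] assms(3) by simp
  finally have "circuit S I C" using assms(4)[of C] circ by blast
  moreover have "I C" using assms(1,5) C(1) by (rule mdown)
  ultimately show False unfolding circuit_def by blast
qed

theorem proposition2p2:
  fixes S :: "'a set" and indep indep' :: "'a set \<Rightarrow> bool" and r :: nat
  assumes "matroid S indep" and "matroid S indep'"
    and "matroid_rank S indep = r" and "matroid_rank S indep' = r"
    and "\<And>C. card C \<le> r \<Longrightarrow> (circuit S indep C \<longleftrightarrow> circuit S indep' C)"
  shows "indep = indep'"
proof -
  have sym5: "circuit S indep' C \<longleftrightarrow> circuit S indep C" if "card C \<le> r" for C
    using assms(5)[OF that] by (rule sym)
  show ?thesis
  proof (rule ext, rule iffI)
    fix X assume "indep X"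
    from one_dir[OF assms(1,2,3) assms(5) this] show "indep' X" .
  next
    fix X assume "indep' X"
    from one_dir[OF assms(2,1,4) sym5 this] show "indep X" .
  qed
qed

end
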